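(* Let $n\ge3$, let $i\ge 0$ be an integer with $i>(n-4)(n-1)$, and let $1\le k\le n$. Then \[|\mathcal{L}_i\cap\mathcal{B}_k|=b_{r_i+k-n-1}\qquad\text{and}\qquad |\mathcal{L}_i|=c_{r_i-1}.\]
   Context: Fix an integer $n\ge 3$. A partition is a sequence $\Lambda=(\lambda_j)_{j\ge1}$ of non-negative integers with finite support; $\mathrm{wt}(\Lambda)=\sum_j j\lambda_j$; $\mathrm{Part}(k)$ is the set of partitions with $\lambda_j=0$ for $j>k$. Write $x^\Lambda=\prod_j x_j^{\lambda_j}$, $\deg(x^\Lambda)=\sum_j\lambda_j$, and $\partial_k$ for the formal symbol of partial derivative in $x_k$. $\mathcal{B}=\{x^\Lambda\partial_k : 1\le k\le n,\ \Lambda\in\mathrm{Part}(k-1)\}$ and $\mathcal{B}_u=\{x^\Lambda\partial_k\in\mathcal{B}: k=u\}$. For an integer $i\ge-1$, let $r_i\in\{1,\dots,n-1\}$ with $i\equiv r_i\pmod{n-1}$ and $h_i=\lfloor (i-1)/(n-1)\rfloor+1$. Define $\mathrm{WD}(x^\Lambda\partial_k)=\mathrm{wt}(\Lambda)-\deg(x^\Lambda)+n-k$ and $\mathrm{lev}_i(x^\Lambda\partial_k)=h_i\,\mathrm{WD}(x^\Lambda\partial_k)+\deg(x^\Lambda)-1$. For $i\ge-1$, $\mathcal{N}_i=\{b\in\mathcal{B}: \mathrm{lev}_j(b)\le j\text{ for some integer } -1\le j\le i\}$, and $\mathcal{L}_i=\mathcal{N}_i\setminus\mathcal{N}_{i-1}$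 for $i\ge0$. Let $a_m$ be the number of partitions of $m\ge0$ ($a_0=1$), $b_m=\sum_{j=0}^m a_j$, $c_m=\sum_{j=0}^m b_j$, with the convention $b_m=0$ for $m<0$. *)

theory Defs
  imports Complex_Main
begin

text \<open>A partition is a finitely supported sequence (lambda_j) indexed by j >= 1;
  we represent it as a function nat => nat whose value at 0 is 0.
  Part(k): lambda_j = 0 for j > k.\<close>

definition Part :: "nat \<Rightarrow> (nat \<Rightarrow> nat) set" where
  "Part k = {L. L 0 = 0 \<and> (\<forall>j>k. L j = 0)}"

text \<open>Basis element x^L d_k is represented by the pair (L, k).\<close>

definition BB :: "nat \<Rightarrow> ((nat \<Rightarrow> nat) \<times> nat) set" where
  "BB n = {(L, k). 1 \<le> k \<and> k \<le> n \<and> L \<in> Part (k - 1)}"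

definition BBu :: "nat \<Rightarrow> nat \<Rightarrow> ((nat \<Rightarrow> nat) \<times> nat) set" where
  "BBu n u = {b \<in> BB n. snd b = u}"

definition wt :: "(nat \<Rightarrow> nat) \<times> nat \<Rightarrow> int" where
  "wt b = (\<Sum>j\<in>{1..<snd b}. int j * int (fst b j))"

definition dg :: "(nat \<Rightarrow> nat) \<times> nat \<Rightarrow> int" where
  "dg b = (\<Sum>j\<in>{1..<snd b}. int (fst b j))"

definition WD :: "nat \<Rightarrow> (nat \<Rightarrow> nat) \<times> nat \<Rightarrow> int" where
  "WD n b = wt b - dg b + int n - int (snd b)"

definition rr :: "nat \<Rightarrow> int \<Rightarrow> int" where
  "rr n i = (i - 1) mod (int n - 1) + 1"

definition hh :: "nat \<Rightarrow> int \<Rightarrow> int" where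
  "hh n i = \<lfloor>of_int (i - 1) / (of_int (int n - 1) :: real)\<rfloor> + 1"

definition lev :: "nat \<Rightarrow> int \<Rightarrow> (nat \<Rightarrow> nat) \<times> nat \<Rightarrow> int" where
  "lev n i b = hh n i * WD n b + dg b - 1"

definition NN :: "nat \<Rightarrow> int \<Rightarrow> ((nat \<Rightarrow> nat) \<times> nat) set" where
  "NN n i = {b \<in> BB n. \<exists>j::int. -1 \<le> j \<and> j \<le> i \<and> lev n j b \<le> j}"

definition LL :: "nat \<Rightarrow> int \<Rightarrow> ((nat \<Rightarrow> nat) \<times> nat) set" where
  "LL n i = NN n i - NN n (i - 1)"

definition pa :: "nat \<Rightarrow> nat" where
  "pa m = card {L \<in> Part m. (\<Sum>j\<in>{1..m}. j * L j) = m}"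

definition pb :: "int \<Rightarrow> nat" where
  "pb m = (if m < 0 then 0 else (\<Sum>j\<in>{0..nat m}. pa j))"

definition pc :: "int \<Rightarrow> nat" where
  "pc m = (\<Sum>j\<in>{0..m}. pb j)"

end

theory Submission
  imports Defs
begin


lemma hh_eq: "hh n j = (j - 1) div (int n - 1) + 1"
  unfolding hh_def floor_divide_of_int_eq ..

lemma hr_of:
  assumes "n \<ge> 3" "1 \<le> r'" "r' \<le> int n - 1" "j = (h' - 1) * (int n - 1) + r'"
  shows "hh n j = h' \<and> rr n j = r'"
proof -
  have e: "j - 1 = (r' - 1) + (h' - 1) * (int n - 1)" using assms(4) by simp
  have nz: "int n - 1 \<noteq> 0" using assms(1) by simp
  have "(j-1) div (int n - 1) = h' - 1"
    unfolding e using nz assms by (simp add: div_mult_self1)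
  moreover have "(j-1) mod (int n - 1) = r' - 1"
    unfolding e using nz assms by (simp add: mod_mult_self1)
  ultimately show ?thesis unfolding hh_eq rr_def by simp
qed

lemma decomp:
  assumes "n \<ge> 3" "j \<ge> 1"
  shows "j = (hh n j - 1) * (int n - 1) + rr n j \<and> 1 \<le> rr n j \<and> rr n j \<le> int n - 1 \<and> hh n j \<ge> 1"
proof -
  have p: "int n - 1 > 0" using assms by simp
  have "j - 1 = (j - 1) div (int n - 1) * (int n - 1) + (j - 1) mod (int n - 1)"
    by (rule div_mult_mod_eq[symmetric])
  moreover have "0 \<le> (j - 1) mod (int n - 1)" "(j - 1) mod (int n - 1) < int n - 1"
    using p by auto
  moreover have "0 \<le> (j - 1) div (int n - 1)" using p assms by (simp add: pos_imp_zdiv_nonneg_iff)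
  ultimately show ?thesis unfolding hh_eq rr_def by auto
qed

lemma P_char:
  assumes "n \<ge> 3" "1 \<le> r'" "r' \<le> int n - 1" "j = (h' - 1) * (int n - 1) + r'"
  shows "(lev n j b \<le> j) \<longleftrightarrow> dg b + (int n - 1) - 1 - r' \<le> h' * ((int n - 1) - WD n b)"
proof -
  have "hh n j = h'" using hr_of[OF assms] by simp
  then have le: "lev n j b = h' * WD n b + dg b - 1" unfolding lev_def by simp
  have "lev n j b \<le> j \<longleftrightarrow> h' * WD n b + dg b - 1 \<le> (h' - 1) * (int n - 1) + r'"
    unfolding le using assms(4) by simp
  also have "\<dots> \<longleftrightarrow> dg b + (int n - 1) - 1 - r' \<le> h' * ((int n - 1) - WD n b)"
    by (simp add: algebra_simps)
  finally show ?thesis .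
qed

lemma hh_small: "n \<ge> 3 \<Longrightarrow> hh n 0 = 0 \<and> rr n 0 = int n - 1"
  using hr_of[of n "int n - 1" 0 0] by simp

lemma hh_small2: "n \<ge> 3 \<Longrightarrow> hh n (-1) = 0"
  using hr_of[of n "int n - 2" "-1" 0] by simp

lemma wd_sum: "wt b - dg b = (\<Sum>j\<in>{1..<snd b}. (int j - 1) * int (fst b j))"
  unfolding wt_def dg_def by (simp add: sum_subtractf[symmetric] algebra_simps)

lemma wd_nonneg: "wt b - dg b \<ge> 0"
  unfolding wd_sum by (rule sum_nonneg) auto

lemma dg_nonneg: "dg b \<ge> 0"
  unfolding dg_def by (rule sum_nonneg) auto

lemma wd_bound: "wt b - dg b \<le> (int (snd b) - 2) * dg b"
proof -
  have "wt b - dg b \<le> (\<Sum>j\<in>{1..<snd b}. (int (snd b) - 2) * int (fst b j))"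
    unfolding wd_sum by (rule sum_mono) (auto intro: mult_right_mono)
  also have "\<dots> = (int (snd b) - 2) * dg b" unfolding dg_def by (simp add: sum_distrib_left)
  finally show ?thesis .
qed

lemma WD_nonneg: "b \<in> BB n \<Longrightarrow> WD n b \<ge> 0"
  using wd_nonneg[of b] unfolding WD_def BB_def by auto

lemma LL_iff: "i \<ge> 0 \<Longrightarrow> b \<in> LL n i \<longleftrightarrow> b \<in> BB n \<and> lev n i b \<le> i \<and> (\<forall>j. -1 \<le> j \<and> j \<le> i - 1 \<longrightarrow> \<not> lev n j b \<le> j)"
  unfolding LL_def NN_def
  by auto (metis le_less)

lemma CHAR:
  assumes n3: "n \<ge> 3" and i0: "i \<ge> 0" and bB: "b \<in> BB n"
  shows "b \<in> LL n i \<longleftrightarrow> (int n - rr n i \<le> int n - 1 - WD n b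
      \<and> dg b = hh n i * (int n - 1 - WD n b) + 2 - (int n - rr n i))"
proof -
  define N where "N = int n - 1"
  define E where "E = int n - 1 - WD n b"
  define d where "d = dg b"
  have N2: "N \<ge> 2" using n3 unfolding N_def by simp
  have EN: "E \<le> N" using WD_nonneg[OF bB] unfolding E_def N_def by simp
  have d0: "d \<ge> 0" unfolding d_def by (rule dg_nonneg)
  have lev0: "lev n 0 b = d - 1" "lev n (-1) b = d - 1"
    using hh_small[OF n3] hh_small2[OF n3] unfolding lev_def d_def by auto
  show ?thesis
  proof (cases "i = 0")
    case True
    have Ek: "E = int (snd b) - 1 - (wt b - dg b)" unfolding E_def WD_def by simp
    have "b \<in> LL n i \<longleftrightarrow> d = 1"
      unfolding LL_iff[OF i0] using True bB lev0 by auto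
    moreover have "d = 1 \<Longrightarrow> 1 \<le> E" using wd_bound[of b] Ek unfolding d_def by simp
    ultimately show ?thesis using hh_small[OF n3] True unfolding E_def[symmetric] d_def[symmetric]
      by auto
  next
    case False
    then have i1: "i \<ge> 1" using i0 by simp
    define h where "h = hh n i"
    define r where "r = rr n i"
    have dec: "i = (h - 1) * N + r" "1 \<le> r" "r \<le> N" "h \<ge> 1"
      using decomp[OF n3 i1] unfolding h_def r_def N_def by auto
    have PC: "lev n j b \<le> j \<longleftrightarrow> d + N - 1 - r' \<le> h' * E"
      if "1 \<le> r'" "r' \<le> N" "j = (h' - 1) * N + r'" for j h' r'
      using P_char[OF n3, of r' j h' b] that unfolding N_def E_def d_def by simp
    have goal: "b \<in> LL n i \<longleftrightarrow> (N + 1 - r \<le> E \<and> d = h * E + r + 1 - N)"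
    proof
      assume L: "b \<in> LL n i"
      then have Pi: "lev n i b \<le> i" and nP: "\<And>j. -1 \<le> j \<Longrightarrow> j \<le> i - 1 \<Longrightarrow> \<not> lev n j b \<le> j"
        unfolding LL_iff[OF i0] by auto
      have d2: "d \<ge> 2" using nP[of 0] i1 lev0 by simp
      have Pi': "d + N - 1 - r \<le> h * E" using Pi PC[OF dec(2,3,1)] by simp
      have D: "d = h * E + r + 1 - N"
      proof (rule ccontr)
        assume "d \<noteq> h * E + r + 1 - N"
        then have dl: "d \<le> h * E + r - N" using Pi' by simp
        show False
        proof (cases "r \<ge> 2")
          case True
          have eq: "i - 1 = (h - 1) * N + (r - 1)" using dec by simp
          have "lev n (i - 1) b \<le> i - 1"
            using PC[of "r - 1" "i - 1" h, OF _ _ eq] True dec dl by simp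
          then show False using nP[of "i - 1"] i1 by simp
        next
          case False
          then have r1: "r = 1" using dec by simp
          show False
          proof (cases "h \<ge> 2")
            case True
            have eq: "(h - 1) * N = (h - 1 - 1) * N + N" by (simp add: algebra_simps)
            have "h * E - E = (h - 1) * E" by (simp add: algebra_simps)
            then have "lev n ((h - 1) * N) b \<le> (h - 1) * N"
              using PC[of N "(h - 1) * N" "h - 1", OF _ _ eq] N2 dl EN r1 by simp
            moreover have "(h - 1) * N \<ge> 0" using True N2 by simp
            ultimately show False using nP[of "(h - 1) * N"] dec r1 by simp
          next
            case False
            then have "h = 1" using dec by simp
            then show False using dl r1 EN d2 by simp
          qed
        qed
      qed
      have A: "N + 1 - r \<le> E"
      proof (cases "h \<ge> 2")
        case True
        have eq: "(h - 1) * N = (h - 1 - 1) * N + N" by (simp add: algebra_simps)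
        have hm: "h * E - E = (h - 1) * E" by (simp add: algebra_simps)
        have "(h - 1) * N \<ge> 0" using True N2 by simp
        then have j1: "-1 \<le> (h - 1) * N" by simp
        have j2: "(h - 1) * N \<le> i - 1" using dec by simp
        have "\<not> lev n ((h - 1) * N) b \<le> (h - 1) * N" using nP[OF j1 j2] .
        then have "\<not> d - 1 \<le> (h - 1) * E"
          using PC[of N "(h - 1) * N" "h - 1", OF _ _ eq] N2 by simp
        then show ?thesis using D hm by simp
      next
        case False
        then have "h = 1" using dec by simp
        then show ?thesis using D d2 by simp
      qed
      show "N + 1 - r \<le> E \<and> d = h * E + r + 1 - N" using A D by simp
    next
      assume R: "N + 1 - r \<le> E \<and> d = h * E + r + 1 - N"
      then have A: "N + 1 - r \<le> E" and D: "d = h * E + r + 1 - N" by auto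
      have E1: "E \<ge> 1" using A dec by simp
      have hE: "h * E \<ge> E" using E1 dec(4) by (simp add: mult_right_mono[of 1 h E, simplified])
      have d2: "d \<ge> 2" using D hE A by simp
      have Pi: "lev n i b \<le> i" using PC[OF dec(2,3,1)] D by simp
      have nP: "\<not> lev n j b \<le> j" if j1: "-1 \<le> j" and j2: "j \<le> i - 1" for j
      proof (cases "j \<le> 0")
        case True
        then have "j = 0 \<or> j = -1" using j1 by auto
        then show ?thesis using lev0 d2 by auto
      next
        case False
        then have "j \<ge> 1" by simp
        define h' where "h' = hh n j"
        define r' where "r' = rr n j"
        have dj: "j = (h' - 1) * N + r'" "1 \<le> r'" "r' \<le> N" "h' \<ge> 1"
          using decomp[OF n3 \<open>j \<ge> 1\<close>] unfolding h'_def r'_def N_def by auto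
        show ?thesis
        proof
          assume "lev n j b \<le> j"
          then have c: "d + N - 1 - r' \<le> h' * E" using PC[OF dj(2,3,1)] by simp
          then have c2: "h * E + r - r' \<le> h' * E" using D by simp
          have lt: "(h' - 1) * N + r' \<le> (h - 1) * N + r - 1" using dj j2 dec by simp
          consider "h' > h" | "h' = h" | "h' < h" by linarith
          then show False
          proof cases
            case 1
            then have "h * N \<le> (h' - 1) * N" using N2 by (simp add: mult_right_mono)
            then show False using lt dec dj by (simp add: algebra_simps)
          next
            case 2
            then show False using lt c2 by simp
          next
            case 3
            then have "(h' + 1) * E \<le> h * E" using E1 by (simp add: mult_right_mono)
            then show False using c2 A dj by (simp add: algebra_simps)
          qed
        qed
      qed
      show "b \<in> LL n i" unfolding LL_iff[OF i0] using bB Pi nP by auto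
    qed
    show ?thesis unfolding goal h_def[symmetric] r_def[symmetric] E_def[symmetric] d_def[symmetric]
      using N_def by (simp add: algebra_simps) arith
  qed
qed



definition sh :: "(nat \<Rightarrow> nat) \<Rightarrow> nat \<Rightarrow> nat" where
  "sh L j = (if j = 0 then 0 else L (Suc j))"

definition Tm :: "nat \<Rightarrow> (nat \<Rightarrow> nat) set" where
  "Tm m = {\<mu>. \<mu> 0 = 0 \<and> (\<forall>j>m. \<mu> j = 0) \<and> (\<Sum>j\<in>{1..m}. j * \<mu> j) \<le> m}"

lemma box_finite: "finite {f::nat\<Rightarrow>nat. (\<forall>j. f j \<le> B) \<and> (\<forall>j>N. f j = 0)}"
  (is "finite ?X")
proof -
  have inj: "inj_on (\<lambda>f. map f [0..<Suc N]) ?X"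
  proof (rule inj_onI)
    fix f g assume f: "f \<in> ?X" and g: "g \<in> ?X" and e: "map f [0..<Suc N] = map g [0..<Suc N]"
    show "f = g"
    proof
      fix j show "f j = g j"
      proof (cases "j \<le> N")
        case True
        then have "j \<in> set [0..<Suc N]" by auto
        then show ?thesis using e by (metis list.map_comp map_eq_conv)
      next
        case False then show ?thesis using f g by auto
      qed
    qed
  qed
  have "(\<lambda>f. map f [0..<Suc N]) ` ?X \<subseteq> {xs. set xs \<subseteq> {0..B} \<and> length xs = Suc N}"
    by auto
  moreover have "finite {xs. set xs \<subseteq> {0..B} \<and> length xs = Suc N}"
    by (rule finite_lists_length_eq) simp
  ultimately have "finite ((\<lambda>f. map f [0..<Suc N]) ` ?X)" by (rule finite_subset)
  then show ?thesis using inj finite_imageD by blast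
qed

lemma sum_supp:
  fixes g :: "nat \<Rightarrow> nat"
  assumes "\<forall>j>q. g j = 0" "q \<le> m"
  shows "sum g {1..m} = sum g {1..q}"
  by (rule sum.mono_neutral_right) (use assms in auto)

lemma term_le: "j \<in> {1..m} \<Longrightarrow> (j::nat) * \<mu> j \<le> (\<Sum>j\<in>{1..m}. j * \<mu> j)"
  by (rule member_le_sum) auto

lemma supp_from_weight:
  assumes "(\<Sum>j\<in>{1..K}. j * \<mu> j) \<le> m" "\<forall>j>K. \<mu> j = (0::nat)" "j > m" "\<mu> 0 = 0"
  shows "\<mu> j = 0"
proof (cases "j > K")
  case True then show ?thesis using assms by auto
next
  case False
  show ?thesis
  proof (rule ccontr)
    assume "\<mu> j \<noteq> 0"
    then have a1: "j \<le> j * \<mu> j" by simp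
    have "j \<ge> 1" using assms(3) by simp
    then have "j \<in> {1..K}" using False by simp
    then have "j * \<mu> j \<le> (\<Sum>j\<in>{1..K}. j * \<mu> j)" by (rule term_le)
    then have "j \<le> (\<Sum>j\<in>{1..K}. j * \<mu> j)" using a1 by linarith
    then show False using assms by simp
  qed
qed

lemma dsum_le_wsum: "(\<Sum>j\<in>{1..m}. \<mu> j) \<le> (\<Sum>j\<in>{1..m::nat}. j * \<mu> j)"
  by (rule sum_mono) simp

lemma Tm_card: "finite (Tm m) \<and> card (Tm m) = pb (int m)"
proof -
  define A where "A q = {L \<in> Part q. (\<Sum>j\<in>{1..q}. j * L j) = q}" for q
  have Tbox: "Tm m \<subseteq> {f::nat\<Rightarrow>nat. (\<forall>j. f j \<le> m) \<and> (\<forall>j>m. f j = 0)}"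
  proof (safe)
    fix \<mu> j assume "\<mu> \<in> Tm m"
    then have t: "\<mu> 0 = 0" "\<forall>j>m. \<mu> j = 0" "(\<Sum>j\<in>{1..m}. j * \<mu> j) \<le> m" unfolding Tm_def by auto
    show "\<mu> j \<le> m"
    proof (cases "j \<in> {1..m}")
      case True
      then have "\<mu> j \<le> j * \<mu> j" by simp
      moreover have "j * \<mu> j \<le> (\<Sum>j\<in>{1..m}. j * \<mu> j)" using True by (rule term_le)
      ultimately show ?thesis using t by linarith
    next
      case False
      then have "j = 0 \<or> j > m" by auto
      then show ?thesis using t by auto
    qed
  next
    fix \<mu> j assume "\<mu> \<in> Tm m" "m < j" then show "\<mu> j = 0" unfolding Tm_def by auto
  qed
  have finT: "finite (Tm m)" using finite_subset[OF Tbox box_finite] .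
  have eq: "Tm m = (\<Union>q\<in>{0..m}. A q)"
  proof
    show "Tm m \<subseteq> (\<Union>q\<in>{0..m}. A q)"
    proof
      fix \<mu> assume "\<mu> \<in> Tm m"
      then have t: "\<mu> 0 = 0" "\<forall>j>m. \<mu> j = 0" "(\<Sum>j\<in>{1..m}. j * \<mu> j) \<le> m" unfolding Tm_def by auto
      define q where "q = (\<Sum>j\<in>{1..m}. j * \<mu> j)"
      have s: "\<forall>j>q. \<mu> j = 0" using supp_from_weight[OF _ t(2) _ t(1)] unfolding q_def by auto
      have "\<forall>j>q. j * \<mu> j = 0" using s by auto
      then have "(\<Sum>j\<in>{1..m}. j * \<mu> j) = (\<Sum>j\<in>{1..q}. j * \<mu> j)"
        using sum_supp[of q "\<lambda>j. j * \<mu> j" m] t unfolding q_def by auto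
      then have "\<mu> \<in> A q" unfolding A_def Part_def using s t q_def by auto
      moreover have "q \<in> {0..m}" using t q_def by auto
      ultimately show "\<mu> \<in> (\<Union>q\<in>{0..m}. A q)" by auto
    qed
  next
    show "(\<Union>q\<in>{0..m}. A q) \<subseteq> Tm m"
    proof
      fix \<mu> assume "\<mu> \<in> (\<Union>q\<in>{0..m}. A q)"
      then obtain q where q: "q \<le> m" "\<mu> \<in> A q" by auto
      then have t: "\<mu> 0 = 0" "\<forall>j>q. \<mu> j = 0" "(\<Sum>j\<in>{1..q}. j * \<mu> j) = q"
        unfolding A_def Part_def by auto
      have "\<forall>j>q. j * \<mu> j = 0" using t by auto
      then have "(\<Sum>j\<in>{1..m}. j * \<mu> j) = q"
        using sum_supp[of q "\<lambda>j. j * \<mu> j" m] t q by auto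
      then show "\<mu> \<in> Tm m" unfolding Tm_def using t q by auto
    qed
  qed
  have sub: "A q \<subseteq> Tm m" if "q \<in> {0..m}" for q using eq that by auto
  have finA: "\<forall>q\<in>{0..m}. finite (A q)" using sub finite_subset finT by blast
  have disj: "\<forall>q\<in>{0..m}. \<forall>q'\<in>{0..m}. q \<noteq> q' \<longrightarrow> A q \<inter> A q' = {}"
  proof (intro ballI impI)
    fix q q' assume q: "q \<in> {0..m}" and q': "q' \<in> {0..m}" and ne: "q \<noteq> q'"
    show "A q \<inter> A q' = {}"
    proof (rule ccontr)
      assume "A q \<inter> A q' \<noteq> {}"
      then obtain \<mu> where a: "\<mu> \<in> A q" "\<mu> \<in> A q'" by auto
      have s1: "\<forall>j>q. j * \<mu> j = 0" "\<forall>j>q'. j * \<mu> j = 0" using a unfolding A_def Part_def by auto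
      have "(\<Sum>j\<in>{1..m}. j * \<mu> j) = q"
        using sum_supp[of q "\<lambda>j. j * \<mu> j" m] s1 q a unfolding A_def by auto
      moreover have "(\<Sum>j\<in>{1..m}. j * \<mu> j) = q'"
        using sum_supp[of q' "\<lambda>j. j * \<mu> j" m] s1 q' a unfolding A_def by auto
      ultimately show False using ne by simp
    qed
  qed
  have "card (Tm m) = (\<Sum>q\<in>{0..m}. card (A q))"
    unfolding eq by (rule card_UN_disjoint) (use finA disj in auto)
  also have "\<dots> = pb (int m)" unfolding pb_def pa_def A_def by simp
  finally show ?thesis using finT by simp
qed



lemma sum_shift2: "(\<Sum>j\<in>{1..<Suc (Suc K)}. F j) = F (1::nat) + (\<Sum>j\<in>{1..K}. F (Suc j))"
proof -
  have "{1..<Suc (Suc K)} = {1..Suc K}" by auto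
  then have "(\<Sum>j\<in>{1..<Suc (Suc K)}. F j) = F 1 + (\<Sum>j\<in>{Suc 1..Suc K}. F j)"
    by (simp add: sum.atLeast_Suc_atMost del: sum.cl_ivl_Suc sum.op_ivl_Suc)
  also have "(\<Sum>j\<in>{Suc 1..Suc K}. F j) = (\<Sum>j\<in>{1..K}. F (Suc j))"
    by (rule sum.shift_bounds_cl_Suc_ivl)
  finally show ?thesis .
qed

lemma wd_shift: "wt (L, Suc (Suc K)) - dg (L, Suc (Suc K)) = int (\<Sum>j\<in>{1..K}. j * sh L j)"
proof -
  have "wt (L, Suc (Suc K)) - dg (L, Suc (Suc K)) = (\<Sum>j\<in>{1..<Suc (Suc K)}. (int j - 1) * int (L j))"
    unfolding wd_sum by simp
  also have "\<dots> = (int 1 - 1) * int (L 1) + (\<Sum>j\<in>{1..K}. (int (Suc j) - 1) * int (L (Suc j)))"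
    by (rule sum_shift2)
  also have "\<dots> = (\<Sum>j\<in>{1..K}. int (j * sh L j))"
    by (simp, rule sum.cong) (auto simp: sh_def)
  also have "\<dots> = int (\<Sum>j\<in>{1..K}. j * sh L j)" by (simp only: of_nat_sum)
  finally show ?thesis .
qed

lemma dg_shift: "dg (L, Suc (Suc K)) = int (L 1) + int (\<Sum>j\<in>{1..K}. sh L j)"
proof -
  have "dg (L, Suc (Suc K)) = (\<Sum>j\<in>{1..<Suc (Suc K)}. int (L j))"
    unfolding dg_def by simp
  also have "\<dots> = int (L 1) + (\<Sum>j\<in>{1..K}. int (L (Suc j)))"
    by (rule sum_shift2)
  also have "(\<Sum>j\<in>{1..K}. int (L (Suc j))) = (\<Sum>j\<in>{1..K}. int (sh L j))"
    by (rule sum.cong) (auto simp: sh_def)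
  also have "\<dots> = int (\<Sum>j\<in>{1..K}. sh L j)" by (simp only: of_nat_sum)
  finally show ?thesis .
qed

lemma count_S:
  fixes a h :: int and K m :: nat
  assumes a1: "a \<ge> 1" and h0: "h \<ge> 0" and ma: "int m + a = int (Suc K)"
    and ha: "h * a + 2 \<ge> int (Suc K)"
  defines "S \<equiv> {L \<in> Part (Suc K). a \<le> int (Suc K) - int (\<Sum>j\<in>{1..K}. j * sh L j)
     \<and> int (L 1) + int (\<Sum>j\<in>{1..K}. sh L j) = h * (int (Suc K) - int (\<Sum>j\<in>{1..K}. j * sh L j)) + 2 - a}"
  shows "bij_betw sh S (Tm m)"
proof -
  define g where "g \<mu> = (\<lambda>j. if j = 0 then 0 else if j = 1 then
     nat (h * (int (Suc K) - int (\<Sum>j\<in>{1..m}. j * \<mu> j)) + 2 - a - int (\<Sum>j\<in>{1..m}. \<mu> j))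
     else \<mu> (j - 1))" for \<mu>
  have mK: "m \<le> K" using ma a1 by simp
  have shS: "sh L \<in> Tm m \<and> g (sh L) = L" if L: "L \<in> S" for L
  proof -
    define \<mu> where "\<mu> = sh L"
    have P: "L 0 = 0" "\<forall>j>Suc K. L j = 0" using L unfolding S_def Part_def by auto
    have c1: "a \<le> int (Suc K) - int (\<Sum>j\<in>{1..K}. j * \<mu> j)"
     and c2: "int (L 1) + int (\<Sum>j\<in>{1..K}. \<mu> j) = h * (int (Suc K) - int (\<Sum>j\<in>{1..K}. j * \<mu> j)) + 2 - a"
      using L unfolding S_def \<mu>_def by auto
    have "int (\<Sum>j\<in>{1..K}. j * \<mu> j) \<le> int m" using c1 ma by linarith
    then have w: "(\<Sum>j\<in>{1..K}. j * \<mu> j) \<le> m" by (simp only: of_nat_le_iff)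
    have m0: "\<mu> 0 = 0" unfolding \<mu>_def sh_def by simp
    have sK: "\<forall>j>K. \<mu> j = 0" using P unfolding \<mu>_def sh_def by auto
    have sm: "\<forall>j>m. \<mu> j = 0" using supp_from_weight[OF w sK _ m0] by auto
    have e1: "(\<Sum>j\<in>{1..K}. j * \<mu> j) = (\<Sum>j\<in>{1..m}. j * \<mu> j)"
      by (rule sum_supp) (use sm mK in auto)
    have e2: "(\<Sum>j\<in>{1..K}. \<mu> j) = (\<Sum>j\<in>{1..m}. \<mu> j)"
      by (rule sum_supp) (use sm mK in auto)
    have T: "\<mu> \<in> Tm m" unfolding Tm_def using m0 sm w e1 by auto
    have "g \<mu> = L"
    proof
      fix j
      show "g \<mu> j = L j"
      proof (cases "j = 0")
        case True then show ?thesis using P unfolding g_def by simp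
      next
        case False
        show ?thesis
        proof (cases "j = 1")
          case True
          have c2': "int (L 1) + int (\<Sum>j\<in>{1..m}. \<mu> j) = h * (int (Suc K) - int (\<Sum>j\<in>{1..m}. j * \<mu> j)) + 2 - a"
            using c2 unfolding e1 e2 .
          then have X: "int (L 1) = h * (int (Suc K) - int (\<Sum>j\<in>{1..m}. j * \<mu> j)) + 2 - a - int (\<Sum>j\<in>{1..m}. \<mu> j)"
            by linarith
          have g1: "g \<mu> 1 = nat (h * (int (Suc K) - int (\<Sum>j\<in>{1..m}. j * \<mu> j)) + 2 - a - int (\<Sum>j\<in>{1..m}. \<mu> j))"
            unfolding g_def by simp
          show ?thesis using g1 X True by (metis nat_int)
        next
          case False
          then show ?thesis using \<open>j \<noteq> 0\<close> unfolding g_def \<mu>_def sh_def by simp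
        qed
      qed
    qed
    then show ?thesis using T unfolding \<mu>_def by simp
  qed
  have gT: "g \<mu> \<in> S \<and> sh (g \<mu>) = \<mu>" if T: "\<mu> \<in> Tm m" for \<mu>
  proof -
    have t: "\<mu> 0 = 0" "\<forall>j>m. \<mu> j = 0" "(\<Sum>j\<in>{1..m}. j * \<mu> j) \<le> m" using T unfolding Tm_def by auto
    define L where "L = g \<mu>"
    have shL: "sh L = \<mu>"
    proof
      fix j show "sh L j = \<mu> j" unfolding sh_def L_def g_def using t by simp
    qed
    have PL: "L \<in> Part (Suc K)" unfolding Part_def L_def g_def using t mK by auto
    define w where "w = (\<Sum>j\<in>{1..m}. j * \<mu> j)"
    define dd where "dd = (\<Sum>j\<in>{1..m}. \<mu> j)"
    have e1: "(\<Sum>j\<in>{1..K}. j * \<mu> j) = w" unfolding w_def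
      by (rule sum_supp) (use t mK in auto)
    have e2: "(\<Sum>j\<in>{1..K}. \<mu> j) = dd" unfolding dd_def
      by (rule sum_supp) (use t mK in auto)
    have dw: "dd \<le> w" unfolding dd_def w_def by (rule dsum_le_wsum)
    define E where "E = int (Suc K) - int w"
    have "w \<le> m" using t unfolding w_def by simp
    then have "int w \<le> int m" by (simp only: of_nat_le_iff)
    then have Ea: "E \<ge> a" using ma unfolding E_def by linarith
    have "h * E \<ge> h * a" using Ea h0 by (simp add: mult_left_mono)
    then have nn: "h * E + 2 - a - int dd \<ge> 0" using dw ha Ea unfolding E_def by simp
    have L1: "int (L 1) = h * E + 2 - a - int dd"
      unfolding L_def g_def using nn unfolding E_def w_def dd_def by simp
    have "L \<in> S" unfolding S_def mem_Collect_eq shL e1 e2 using PL L1 Ea unfolding E_def by simp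
    then show ?thesis using shL unfolding L_def by simp
  qed
  show ?thesis
    by (rule bij_betw_byWitness[where f' = g]) (use shS gT in auto)
qed



lemma pc_step: "pc (x + 1) = pc x + pb (x + 1)"
proof (cases "x + 1 < 0")
  case True
  then show ?thesis unfolding pc_def by (simp add: pb_def)
next
  case False
  then have "{0..1 + x} = insert (1 + x) {0..x}" by (intro atLeastAtMostPlus1_int_conv) simp
  then show ?thesis unfolding pc_def by (simp add: add.commute)
qed

lemma sum_pb:
  assumes "r \<le> int n"
  shows "(\<Sum>k\<in>{1..m}. pb (r + int k - int n - 1)) = pc (r + int m - int n - 1)"
proof (induction m)
  case 0
  then show ?case using assms unfolding pc_def by simp
next
  case (Suc m)
  have eq1: "r + int (Suc m) - int n - 1 = r + int m - int n - 1 + 1" by simp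
  have "(\<Sum>k\<in>{1..Suc m}. pb (r + int k - int n - 1)) = (\<Sum>k\<in>{1..m}. pb (r + int k - int n - 1)) + pb (r + int (Suc m) - int n - 1)"
    by simp
  also have "\<dots> = pc (r + int m - int n - 1) + pb (r + int m - int n - 1 + 1)"
    unfolding Suc.IH eq1 ..
  also have "\<dots> = pc (r + int m - int n - 1 + 1)" by (rule pc_step[symmetric])
  also have "\<dots> = pc (r + int (Suc m) - int n - 1)" unfolding eq1 ..
  finally show ?case by simp
qed

lemma rr_bounds: "n \<ge> 3 \<Longrightarrow> 1 \<le> rr n i \<and> rr n i \<le> int n - 1"
proof -
  assume n3: "n \<ge> 3"
  have "(i-1) mod (int n - 1) < int n - 1" by (rule pos_mod_bound) (use n3 in simp)
  moreover have "0 \<le> (i-1) mod (int n - 1)" by (rule pos_mod_sign) (use n3 in simp)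
  ultimately show ?thesis unfolding rr_def by simp
qed

lemma per_k:
  assumes n3: "n \<ge> 3" and i0: "i \<ge> 0" and k1: "1 \<le> k" and kn: "k \<le> n"
    and hb: "hh n i \<ge> int n - 3"
  shows "finite (LL n i \<inter> BBu n k) \<and> card (LL n i \<inter> BBu n k) = pb (rr n i + int k - int n - 1)"
proof -
  define h where "h = hh n i"
  define r where "r = rr n i"
  define a where "a = int n - r"
  have rb: "1 \<le> r" "r \<le> int n - 1" using rr_bounds[OF n3] unfolding r_def by auto
  have a1: "a \<ge> 1" using rb unfolding a_def by simp
  have h0: "h \<ge> 0" using hb n3 unfolding h_def by simp
  define Sk where "Sk = {L \<in> Part (k - 1). a \<le> int k - 1 - (wt (L, k) - dg (L, k))
      \<and> dg (L, k) = h * (int k - 1 - (wt (L, k) - dg (L, k))) + 2 - a}"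
  have EE: "int n - 1 - WD n (L, k) = int k - 1 - (wt (L, k) - dg (L, k))" for L
    unfolding WD_def by simp
  have CH: "(L, k) \<in> LL n i \<longleftrightarrow> L \<in> Sk" if LB: "(L, k) \<in> BB n" for L
  proof -
    have P: "L \<in> Part (k - 1)" using LB unfolding BB_def by simp
    show ?thesis using CHAR[OF n3 i0 LB, unfolded EE, folded r_def h_def, folded a_def] P
      unfolding Sk_def by simp
  qed
  have eqS: "LL n i \<inter> BBu n k = (\<lambda>L. (L, k)) ` Sk"
  proof
    show "LL n i \<inter> BBu n k \<subseteq> (\<lambda>L. (L, k)) ` Sk"
    proof
      fix x assume x: "x \<in> LL n i \<inter> BBu n k"
      then obtain L where xL: "x = (L, k)" unfolding BBu_def by (cases x) auto
      have xB: "x \<in> BB n" using x unfolding BBu_def by auto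
      then have "L \<in> Part (k - 1)" unfolding BB_def xL by simp
      moreover have "(L, k) \<in> LL n i" using x xL by simp
      ultimately have "L \<in> Sk" using CH xB xL by simp
      then show "x \<in> (\<lambda>L. (L, k)) ` Sk" using xL by simp
    qed
  next
    show "(\<lambda>L. (L, k)) ` Sk \<subseteq> LL n i \<inter> BBu n k"
    proof
      fix x assume "x \<in> (\<lambda>L. (L, k)) ` Sk"
      then obtain L where L: "L \<in> Sk" "x = (L, k)" by auto
      have xB: "x \<in> BB n" using L k1 kn unfolding BB_def Sk_def by auto
      have "x \<in> LL n i" using CH xB L by simp
      then show "x \<in> LL n i \<inter> BBu n k" using xB L unfolding BBu_def by simp
    qed
  qed
  have inj: "inj_on (\<lambda>L. (L, k)) Sk" by (rule inj_onI) simp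
  have main: "finite Sk \<and> card Sk = pb (r + int k - int n - 1)"
  proof (cases "k = 1")
    case True
    have "Sk = {}"
    proof -
      have "wt (L, k) - dg (L, k) = 0" for L unfolding wd_sum using True by simp
      then show ?thesis unfolding Sk_def using True a1 by simp
    qed
    moreover have "pb (r + int k - int n - 1) = 0" unfolding pb_def using True rb by simp
    ultimately show ?thesis by simp
  next
    case False
    have "k = Suc (Suc (k - 2))" using k1 False by simp
    then obtain K where kK: "k = Suc (Suc K)" by blast
    show ?thesis
    proof (cases "int (Suc K) < a")
      case True
      have "\<not> a \<le> int k - 1 - (wt (L, k) - dg (L, k))" for L
        using wd_nonneg[of "(L, k)"] True kK by simp
      then have "Sk = {}" unfolding Sk_def by blast
      moreover have "pb (r + int k - int n - 1) = 0" unfolding pb_def using True kK a_def by simp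
      ultimately show ?thesis by simp
    next
      case False
      define m where "m = nat (int (Suc K) - a)"
      have ma: "int m + a = int (Suc K)" using False unfolding m_def by simp
      have "h * a \<ge> h" using a1 h0 by (simp add: mult_left_mono[of 1 a h, simplified])
      then have ha: "h * a + 2 \<ge> int (Suc K)" using hb kn kK unfolding h_def by simp
      have SkS: "Sk = {L \<in> Part (Suc K). a \<le> int (Suc K) - int (\<Sum>j\<in>{1..K}. j * sh L j)
         \<and> int (L 1) + int (\<Sum>j\<in>{1..K}. sh L j) = h * (int (Suc K) - int (\<Sum>j\<in>{1..K}. j * sh L j)) + 2 - a}"
        unfolding Sk_def kK wd_shift unfolding dg_shift by simp
      have bij: "bij_betw sh Sk (Tm m)"
        unfolding SkS by (rule count_S[OF a1 h0 ma ha])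
      have "finite Sk" using bij Tm_card[of m] bij_betw_finite by blast
      moreover have "card Sk = pb (int m)" using bij Tm_card[of m] bij_betw_same_card by metis
      moreover have "int m = r + int k - int n - 1" using ma kK a_def by simp
      ultimately show ?thesis by simp
    qed
  qed
  have "card ((\<lambda>L. (L, k)) ` Sk) = card Sk" by (rule card_image[OF inj])
  moreover have "finite ((\<lambda>L. (L, k)) ` Sk)" using main by simp
  ultimately show ?thesis unfolding eqS using main r_def by simp
qed

theorem corollary2p16:
  fixes n k :: nat and i :: int
  assumes "n \<ge> 3" and "i \<ge> 0" and "i > (int n - 4) * (int n - 1)"
    and "1 \<le> k" and "k \<le> n"
  shows "finite (LL n i \<inter> BBu n k)
       \<and> card (LL n i \<inter> BBu n k) = pb (rr n i + int k - int n - 1)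
       \<and> finite (LL n i) \<and> card (LL n i) = pc (rr n i - 1)"
proof -
  have Np: "int n - 1 > 0" using assms(1) by simp
  have "(int n - 4) * (int n - 1) \<le> i - 1" using assms(3) by simp
  then have "((int n - 4) * (int n - 1)) div (int n - 1) \<le> (i - 1) div (int n - 1)"
    using Np by (rule zdiv_mono1)
  then have "int n - 4 \<le> (i - 1) div (int n - 1)" using Np by simp
  then have hb: "hh n i \<ge> int n - 3" unfolding hh_eq by simp
  have PK: "finite (LL n i \<inter> BBu n k') \<and> card (LL n i \<inter> BBu n k') = pb (rr n i + int k' - int n - 1)"
    if "k' \<in> {1..n}" for k'
    using per_k[OF assms(1,2) _ _ hb] that by auto
  have LB: "LL n i \<subseteq> BB n" using LL_iff[OF assms(2)] by blast
  have U: "LL n i = (\<Union>k'\<in>{1..n}. LL n i \<inter> BBu n k')"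
  proof (rule set_eqI, rule iffI)
    fix x assume x: "x \<in> LL n i"
    then have "x \<in> BB n" using LB by auto
    then have "snd x \<in> {1..n}" "x \<in> BBu n (snd x)" unfolding BB_def BBu_def by (cases x, auto)+
    then show "x \<in> (\<Union>k'\<in>{1..n}. LL n i \<inter> BBu n k')" using x by blast
  next
    fix x assume "x \<in> (\<Union>k'\<in>{1..n}. LL n i \<inter> BBu n k')"
    then show "x \<in> LL n i" by blast
  qed
  define F where "F k' = LL n i \<inter> BBu n k'" for k'
  have U': "LL n i = (\<Union>k'\<in>{1..n}. F k')" using U unfolding F_def .
  have fin: "finite (LL n i)" unfolding U' by (rule finite_UN_I) (use PK in \<open>auto simp: F_def\<close>)
  have "card (LL n i) = (\<Sum>k'\<in>{1..n}. card (F k'))"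
    unfolding U' by (rule card_UN_disjoint) (use PK in \<open>auto simp: BBu_def F_def\<close>)
  also have "\<dots> = (\<Sum>k'\<in>{1..n}. card (LL n i \<inter> BBu n k'))" unfolding F_def ..
  also have "\<dots> = (\<Sum>k'\<in>{1..n}. pb (rr n i + int k' - int n - 1))"
    using PK by simp
  also have "\<dots> = pc (rr n i + int n - int n - 1)"
    by (rule sum_pb) (use rr_bounds[OF assms(1), of i] in simp)
  finally have "card (LL n i) = pc (rr n i - 1)" by simp
  then show ?thesis using PK[of k] assms fin by simp
qed


end
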